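(* Let $\mathcal{M}$ be a set of mappings over a schema $\Sigma$, $\mathcal{D}$ a database instance of $\Sigma$, and $q(\vec x)\leftarrow L_1(\vec v_1),\dots,L_n(\vec v_n)$ a conjunctive query such that $\vec x=\bigcup_{i=1}^n\vec v_i$ (as sets of variables). Then $$|\mathrm{unf}(q(\vec x),\mathcal{M})^{\mathcal{D}}|=\sum_{q_u\in\mathrm{unf}(q,\mathrm{wrap}(\mathcal{M}))}|q_u(\vec x)^{\mathcal{D}}|,$$ where the sum ranges over the conjunctive queries (rules) $q_u$ of the unfolding of $q$ with respect to $\mathrm{wrap}(\mathcal{M})$.
   Context: A mapping is $L(\vec f(\vec x))\leftsquigarrow V(\vec x)$ with $L$ a concept or role name, $\vec f(\vec x)$ a tuple of terms each of the form $g(\vec y)$ ($g$ a function symbol, $\vec y\subseteq\vec x$), and $V$ a view name with extension $V^{\mathcal{D}}$ given by a query over $\Sigma$. Signature: $\mathrm{sign}(m)=(L,\vec f)$. Unfolding of a CQ $q(\vec x)\leftarrow L_1(\vec v_1),\dots,L_n(\vec v_n)$: the non-recursive Datalog query $(q_{\mathrm{unf}}(\vec x),\Pi)$ where $\Pi$ is a minimal (up to renaming) set of rules containing, for every tuple $(m_1,\dots,m_n)$ of mappings with $m_i=L_i(\vec f_i(\vec x_i))\leftsquigarrow V_i(\vec z_i)$ and every mgu $\sigma$ of $\{(L_i(\vec v_i),L_i(\vec f_i(\vec x_i)))\}$, the rule $q_{\mathrm{unf}}(\sigma(\vec x))\leftarrow V_1(\sigma(\vec z_1)),\dots,V_n(\sigma(\vec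 z_n))$; answers are (sets of) tuples of terms $f(\vec a)$. Wrap: for each signature $(L,\vec f)$, if the mappings of that signature are $\{L(\vec f(\vec v_i))\leftsquigarrow V_i(\vec v_i)\mid 1\le i\le k\}$, they are replaced by the single mapping $L(\vec f(\vec v))\leftsquigarrow W(\vec v)$ with fresh variables $\vec v$ and $W$ a fresh view for the Datalog query $(W(\vec v),\{W(\vec v_i)\leftarrow V_i(\vec v_i)\}_i)$ (so $W^{\mathcal{D}}=\bigcup_iV_i^{\mathcal{D}}$); $\mathrm{wrap}(\mathcal{M})$ is the union of these over all signatures. *)

theory Defs
  imports Main
begin

text \<open>First-order terms over function symbols 'f, constants 'c (database values) and
variables 'x.  Ground answer terms have the form Fn f [Cst a1, ..., Cst ak].\<close>

datatype ('f, 'c, 'x) tm = Var 'x | Cst 'c | Fn 'f "('f, 'c, 'x) tm list"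

fun subst :: "('x \<Rightarrow> ('f, 'c, 'y) tm) \<Rightarrow> ('f, 'c, 'x) tm \<Rightarrow> ('f, 'c, 'y) tm" where
  "subst \<sigma> (Var x) = \<sigma> x"
| "subst \<sigma> (Cst c) = Cst c"
| "subst \<sigma> (Fn f ts) = Fn f (map (subst \<sigma>) ts)"

text \<open>A mapping  L(g1(y1),...,gk(yk)) ~> V(x)  with concept/role name L, head terms gi(yi)
(function symbol and list of mapping variables) and view atom V(x).  Mapping variables are
natural numbers.\<close>

datatype ('l, 'f, 'vn) mapping =
  Mapping (m_pred: 'l) (m_head: "('f \<times> nat list) list") (m_view: 'vn) (m_vars: "nat list")

definition sign :: "('l, 'f, 'vn) mapping \<Rightarrow> 'l \<times> 'f list" where
  "sign m = (m_pred m, map fst (m_head m))"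

text \<open>Shape required for wrap to be defined: the mapping is  L(f(v)) ~> V(v)  where
v is the concatenation of the (pairwise distinct) argument variables of the head terms,
and function symbols are used with their fixed arity ar.\<close>

definition normal_mappings :: "('f \<Rightarrow> nat) \<Rightarrow> ('l, 'f, 'vn) mapping set \<Rightarrow> bool" where
  "normal_mappings ar M \<longleftrightarrow>
     (\<forall>m\<in>M. m_vars m = concat (map snd (m_head m)) \<and> distinct (m_vars m) \<and>
             (\<forall>(f, ys)\<in>set (m_head m). length ys = ar f))"

text \<open>Variables of the unfolding: query variables (Inl) and mapping variables renamed apart
per body atom i (Inr (i, y)).\<close>

type_synonym ('f, 'c, 'v) utm = "('f, 'c, 'v + nat \<times> nat) tm"

type_synonym ('f, 'c, 'v, 'vn) rule = "('f, 'c, 'v) utm list \<times> ('vn \<times> ('f, 'c, 'v) utm list) list"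

definition head_term :: "nat \<Rightarrow> 'f \<times> nat list \<Rightarrow> ('f, 'c, 'v) utm" where
  "head_term i fy = Fn (fst fy) (map (\<lambda>y. Var (Inr (i, y))) (snd fy))"

definition unifier ::
  "('l \<times> 'v list) list \<Rightarrow> ('l, 'f, 'vn) mapping list \<Rightarrow> ('v + nat \<times> nat \<Rightarrow> ('f, 'c, 'v) utm) \<Rightarrow> bool" where
  "unifier atoms ms \<sigma> \<longleftrightarrow> length ms = length atoms \<and>
     (\<forall>i<length atoms. fst (atoms ! i) = m_pred (ms ! i) \<and>
        length (snd (atoms ! i)) = length (m_head (ms ! i)) \<and>
        (\<forall>k<length (snd (atoms ! i)).
           \<sigma> (Inl (snd (atoms ! i) ! k)) = subst \<sigma> (head_term i (m_head (ms ! i) ! k))))"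

definition mgu ::
  "('l \<times> 'v list) list \<Rightarrow> ('l, 'f, 'vn) mapping list \<Rightarrow> ('v + nat \<times> nat \<Rightarrow> ('f, 'c, 'v) utm) \<Rightarrow> bool" where
  "mgu atoms ms \<sigma> \<longleftrightarrow> unifier atoms ms \<sigma> \<and>
     (\<forall>\<tau>. unifier atoms ms \<tau> \<longrightarrow> (\<exists>\<theta>. \<forall>x. \<tau> x = subst \<theta> (\<sigma> x)))"

definition unf_rule ::
  "'v list \<Rightarrow> ('l, 'f, 'vn) mapping list \<Rightarrow> ('v + nat \<times> nat \<Rightarrow> ('f, 'c, 'v) utm) \<Rightarrow> ('f, 'c, 'v, 'vn) rule" where
  "unf_rule xs ms \<sigma> =
     (map (\<lambda>x. \<sigma> (Inl x)) xs,
      map (\<lambda>i. (m_view (ms ! i), map (\<lambda>z. \<sigma> (Inr (i, z))) (m_vars (ms ! i)))) [0..<length ms])"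

definition unf_rules ::
  "'v list \<Rightarrow> ('l \<times> 'v list) list \<Rightarrow> ('l, 'f, 'vn) mapping set \<Rightarrow> ('f, 'c, 'v, 'vn) rule set" where
  "unf_rules xs atoms M = {unf_rule xs ms \<sigma> | ms \<sigma>. set ms \<subseteq> M \<and> mgu atoms ms \<sigma>}"

definition rename_rule ::
  "('v + nat \<times> nat \<Rightarrow> 'v + nat \<times> nat) \<Rightarrow> ('f, 'c, 'v, 'vn) rule \<Rightarrow> ('f, 'c, 'v, 'vn) rule" where
  "rename_rule \<rho> r =
     (map (subst (\<lambda>x. Var (\<rho> x))) (fst r),
      map (\<lambda>(V, ts). (V, map (subst (\<lambda>x. Var (\<rho> x))) ts)) (snd r))"

definition variant :: "('f, 'c, 'v, 'vn) rule \<Rightarrow> ('f, 'c, 'v, 'vn) rule \<Rightarrow> bool" where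
  "variant r1 r2 \<longleftrightarrow> (\<exists>\<rho>. bij \<rho> \<and> r2 = rename_rule \<rho> r1)"

text \<open>Pi is a minimal (up to renaming) set of rules containing (a variant of) every rule
of the unfolding: the rule set of unf(q(x), M).\<close>

definition is_unfolding ::
  "'v list \<Rightarrow> ('l \<times> 'v list) list \<Rightarrow> ('l, 'f, 'vn) mapping set \<Rightarrow> ('f, 'c, 'v, 'vn) rule set \<Rightarrow> bool" where
  "is_unfolding xs atoms M \<Pi> \<longleftrightarrow>
     (\<forall>r\<in>unf_rules xs atoms M. \<exists>r'\<in>\<Pi>. variant r r') \<and>
     (\<forall>r'\<in>\<Pi>. \<exists>r\<in>unf_rules xs atoms M. variant r r') \<and>
     (\<forall>r1\<in>\<Pi>. \<forall>r2\<in>\<Pi>. variant r1 r2 \<longrightarrow> r1 = r2)"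

text \<open>ext V is the extension V^D (set of tuples of constants).  Answers of a rule: the
ground instances of its head under assignments satisfying the body.\<close>

definition rule_ans ::
  "('vn \<Rightarrow> 'c list set) \<Rightarrow> ('f, 'c, 'v, 'vn) rule \<Rightarrow> ('f, 'c, 'v) utm list set" where
  "rule_ans ext r =
     {map (subst (\<lambda>x. Cst (\<nu> x))) (fst r) | \<nu>.
        \<forall>(V, ts)\<in>set (snd r). \<exists>cs\<in>ext V. map (subst (\<lambda>x. Cst (\<nu> x))) ts = (map Cst cs :: ('f, 'c, 'v) utm list)}"

definition unf_ans ::
  "('vn \<Rightarrow> 'c list set) \<Rightarrow> ('f, 'c, 'v, 'vn) rule set \<Rightarrow> ('f, 'c, 'v) utm list set" where
  "unf_ans ext \<Pi> = (\<Union>r\<in>\<Pi>. rule_ans ext r)"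

fun canon :: "('f \<Rightarrow> nat) \<Rightarrow> nat \<Rightarrow> 'f list \<Rightarrow> ('f \<times> nat list) list" where
  "canon ar k [] = []"
| "canon ar k (f # fs) = (f, [k..<k + ar f]) # canon ar (k + ar f) fs"

text \<open>The fresh view W for signature s is named by s itself.\<close>

definition wrap_mapping :: "('f \<Rightarrow> nat) \<Rightarrow> 'l \<times> 'f list \<Rightarrow> ('l, 'f, 'l \<times> 'f list) mapping" where
  "wrap_mapping ar s =
     Mapping (fst s) (canon ar 0 (snd s)) s (concat (map snd (canon ar 0 (snd s))))"

definition wrap :: "('f \<Rightarrow> nat) \<Rightarrow> ('l, 'f, 'vn) mapping set \<Rightarrow> ('l, 'f, 'l \<times> 'f list) mapping set" where
  "wrap ar M = wrap_mapping ar ` sign ` M"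

definition wrap_ext ::
  "('vn \<Rightarrow> 'c list set) \<Rightarrow> ('l, 'f, 'vn) mapping set \<Rightarrow> 'l \<times> 'f list \<Rightarrow> 'c list set" where
  "wrap_ext ext M s = (\<Union>m\<in>{m\<in>M. sign m = s}. ext (m_view m))"

end

theory Submission
  imports Defs
begin

fun tvars :: "('f, 'c, 'x) tm \<Rightarrow> 'x set" where
  "tvars (Var x) = {x}"
| "tvars (Cst c) = {}"
| "tvars (Fn f ts) = (\<Union>t\<in>set ts. tvars t)"

lemma finite_tvars: "finite (tvars t)"
  by (induction t) auto

lemma subst_comp: "subst \<theta> (subst \<sigma> t) = subst (\<lambda>x. subst \<theta> (\<sigma> x)) t"
  by (induction t) auto

lemma subst_cong: "(\<And>y. y \<in> tvars t \<Longrightarrow> \<theta> y = \<theta>' y) \<Longrightarrow> subst \<theta> t = subst \<theta>' t"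
  by (induction t) auto

lemma subst_id: "subst \<theta> t = t \<Longrightarrow> y \<in> tvars t \<Longrightarrow> \<theta> y = Var y"
proof (induction t)
  case (Fn f ts)
  then obtain t where "t \<in> set ts" "y \<in> tvars t" by auto
  moreover have "map (subst \<theta>) ts = map id ts" using Fn.prems by simp
  ultimately show ?case using Fn.IH by (metis id_apply map_eq_conv)
qed auto

lemma subst_Cst: "subst \<theta> t = Cst c \<Longrightarrow> y \<in> tvars t \<Longrightarrow> \<theta> y = Cst c"
  by (cases t) auto

lemma extend_bij:
  fixes g :: "'a \<Rightarrow> 'a"
  assumes "finite V" "inj_on g V"
  shows "\<exists>\<rho>. bij \<rho> \<and> (\<forall>y\<in>V. \<rho> y = g y)"
  using assms
proof (induction V rule: finite_induct)
  case empty
  then show ?case using bij_id by blast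
next
  case (insert a V)
  then obtain \<rho> where r: "bij \<rho>" "\<forall>y\<in>V. \<rho> y = g y" by auto
  define sw where "sw = (\<lambda>z. if z = \<rho> a then g a else if z = g a then \<rho> a else z)"
  have "sw \<circ> sw = id" unfolding sw_def by (auto simp: fun_eq_iff)
  then have "bij sw" using o_bij by blast
  have ga: "g a \<notin> g ` V" using insert by auto
  have "\<forall>y\<in>insert a V. (sw \<circ> \<rho>) y = g y"
  proof
    fix y assume "y \<in> insert a V"
    then show "(sw \<circ> \<rho>) y = g y"
    proof
      assume "y = a" then show ?thesis by (simp add: sw_def)
    next
      assume y: "y \<in> V"
      then have "\<rho> y \<noteq> \<rho> a" using r(1) insert(2) by (metis bij_pointE)
      moreover have "\<rho> y \<noteq> g a" using y r(2) ga by (metis image_eqI)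
      ultimately show ?thesis using y r(2) by (simp add: sw_def)
    qed
  qed
  then show ?case using \<open>bij sw\<close> r(1) bij_comp by blast
qed


lemma rename_comp: "rename_rule \<rho> (rename_rule \<rho>' r) = rename_rule (\<rho> \<circ> \<rho>') r"
  unfolding rename_rule_def by (auto simp: subst_comp case_prod_unfold)

lemma subst_Var_id: "subst Var t = t"
  by (induction t) (auto simp: map_idI)

lemma subst_Var_fun: "subst Var = id"
  by (auto simp: subst_Var_id)

lemma rename_id: "rename_rule id r = r"
  unfolding rename_rule_def by (simp add: subst_Var_fun case_prod_unfold)

lemma variant_sym: "variant r1 r2 \<Longrightarrow> variant r2 r1"
  unfolding variant_def
proof (elim exE conjE)
  fix \<rho> assume "bij \<rho>" "r2 = rename_rule \<rho> r1"
  then have "rename_rule (inv \<rho>) r2 = r1"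
    by (simp add: rename_comp bij_is_inj rename_id)
  then show "\<exists>\<rho>. bij \<rho> \<and> r1 = rename_rule \<rho> r2" using \<open>bij \<rho>\<close> bij_imp_bij_inv by metis
qed

lemma variant_trans: "variant r1 r2 \<Longrightarrow> variant r2 r3 \<Longrightarrow> variant r1 r3"
  unfolding variant_def by (metis rename_comp bij_comp)

lemma rule_ans_rename:
  fixes r :: "('f,'c,'v,'vn) rule"
  assumes "bij \<rho>"
  shows "rule_ans E (rename_rule \<rho> r) = rule_ans E r"
proof -
  have c: "(subst (\<lambda>x. Cst (\<nu> x)) (subst (\<lambda>x. Var (\<rho> x)) t) :: ('f,'c,'v) utm) = subst (\<lambda>x. Cst ((\<nu> \<circ> \<rho>) x)) t"
    for \<nu> :: "'v + nat \<times> nat \<Rightarrow> 'c" and t :: "('f,'c,'v) utm"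
    by (simp add: subst_comp)
  define F where "F = (\<lambda>\<nu>::'v + nat \<times> nat \<Rightarrow> 'c. (map (subst (\<lambda>x. Cst (\<nu> x))) (fst r) :: ('f,'c,'v) utm list))"
  define P where "P = (\<lambda>\<nu>::'v + nat \<times> nat \<Rightarrow> 'c. \<forall>(V, ts)\<in>set (snd r). \<exists>cs\<in>E V.
       map (subst (\<lambda>x. Cst (\<nu> x))) ts = (map Cst cs :: ('f,'c,'v) utm list))"
  have "rule_ans E (rename_rule \<rho> r) = {F (\<nu> \<circ> \<rho>) | \<nu>. P (\<nu> \<circ> \<rho>)}"
    unfolding rule_ans_def rename_rule_def F_def P_def
    by (simp add: c comp_def case_prod_unfold)
  also have "\<dots> = {F \<mu> | \<mu>. P \<mu>}"
  proof -
    have "\<mu> = (\<mu> \<circ> inv \<rho>) \<circ> \<rho>" for \<mu> :: "'v + nat \<times> nat \<Rightarrow> 'c"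
      using assms by (simp add: o_assoc[symmetric] bij_is_inj)
    then show ?thesis by (auto; metis)
  qed
  also have "\<dots> = rule_ans E r" unfolding rule_ans_def F_def P_def by simp
  finally show ?thesis .
qed

lemma rule_ans_variant: "variant r1 r2 \<Longrightarrow> rule_ans E r2 = rule_ans E r1"
  unfolding variant_def using rule_ans_rename by metis


definition G :: "'v list \<Rightarrow> ('l \<times> 'v list) list \<Rightarrow> ('l, 'f, 'vn) mapping list \<Rightarrow> ('vn \<Rightarrow> 'c list set)
    \<Rightarrow> ('f, 'c, 'v) utm list set" where
  "G xs atoms ms E = {map (\<lambda>x. \<tau> (Inl x)) xs | \<tau>. unifier atoms ms \<tau> \<and>
     (\<forall>i<length ms. \<exists>cs\<in>E (m_view (ms ! i)). map (\<lambda>z. \<tau> (Inr (i, z))) (m_vars (ms ! i)) = map Cst cs)}"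

definition heads_ok :: "('l, 'f, 'vn) mapping \<Rightarrow> bool" where
  "heads_ok m \<longleftrightarrow> (\<forall>(f, ys)\<in>set (m_head m). set ys \<subseteq> set (m_vars m))"

lemma unifier_comp: "unifier atoms ms \<sigma> \<Longrightarrow> unifier atoms ms (\<lambda>x. subst \<theta> (\<sigma> x))"
  unfolding unifier_def by (simp add: subst_comp[symmetric])

lemma unifier_Inl:
  assumes "unifier atoms ms \<sigma>" "x \<in> (\<Union>a\<in>set atoms. set (snd a))"
  shows "\<exists>i<length ms. \<exists>f ys. (f, ys) \<in> set (m_head (ms ! i)) \<and>
           \<sigma> (Inl x) = Fn f (map (\<lambda>y. \<sigma> (Inr (i, y))) ys)"
proof -
  obtain a where a: "a \<in> set atoms" "x \<in> set (snd a)" using assms(2) by auto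
  then obtain i where i: "i < length atoms" "atoms ! i = a" by (meson in_set_conv_nth)
  then obtain k where k: "k < length (snd (atoms ! i))" "snd (atoms ! i) ! k = x"
    using a by (meson in_set_conv_nth)
  have u: "length ms = length atoms" "length (snd (atoms ! i)) = length (m_head (ms ! i))"
    "\<sigma> (Inl x) = subst \<sigma> (head_term i (m_head (ms ! i) ! k))"
    using assms(1) i k unfolding unifier_def by auto
  obtain f ys where fy: "m_head (ms ! i) ! k = (f, ys)" by fastforce
  have "(f, ys) \<in> set (m_head (ms ! i))" using fy k u(2) by (metis nth_mem)
  moreover have "\<sigma> (Inl x) = Fn f (map (\<lambda>y. \<sigma> (Inr (i, y))) ys)"
    using u(3) fy by (simp add: head_term_def)
  ultimately show ?thesis using i u(1) by auto
qed

lemma rule_ans_mgu: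
  fixes \<sigma> :: "'v + nat \<times> nat \<Rightarrow> ('f,'c,'v) utm" and E :: "'vn \<Rightarrow> 'c list set"
    and ms :: "('l,'f,'vn) mapping list"
  assumes mgu: "mgu atoms ms \<sigma>" and xs: "set xs \<subseteq> (\<Union>a\<in>set atoms. set (snd a))"
    and ok: "\<forall>m\<in>set ms. heads_ok m"
  shows "rule_ans E (unf_rule xs ms \<sigma>) = G xs atoms ms E"
proof
  show "rule_ans E (unf_rule xs ms \<sigma>) \<subseteq> G xs atoms ms E"
  proof
    fix a assume "a \<in> rule_ans E (unf_rule xs ms \<sigma>)"
    then have "\<exists>\<nu>. a = map (\<lambda>x. subst (\<lambda>x. Cst (\<nu> x)) (\<sigma> (Inl x))) xs \<and>
       (\<forall>i<length ms. \<exists>cs\<in>E (m_view (ms ! i)).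
          map (\<lambda>z. subst (\<lambda>x. Cst (\<nu> x)) (\<sigma> (Inr (i, z)))) (m_vars (ms ! i)) = (map Cst cs :: ('f,'c,'v) utm list))"
      unfolding rule_ans_def unf_rule_def
      apply (simp only: mem_Collect_eq fst_conv snd_conv)
      apply (elim exE conjE)
      subgoal for \<nu> by (rule exI[of _ \<nu>]) (simp add: comp_def atLeast0LessThan)
      done
    then obtain \<nu> where a: "a = map (\<lambda>x. subst (\<lambda>x. Cst (\<nu> x)) (\<sigma> (Inl x))) xs"
      and b: "\<forall>i<length ms. \<exists>cs\<in>E (m_view (ms ! i)).
          map (\<lambda>z. subst (\<lambda>x. Cst (\<nu> x)) (\<sigma> (Inr (i, z)))) (m_vars (ms ! i)) = (map Cst cs :: ('f,'c,'v) utm list)"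
      by blast
    define \<tau>' :: "'v + nat \<times> nat \<Rightarrow> ('f,'c,'v) utm" where "\<tau>' = (\<lambda>v. subst (\<lambda>x. Cst (\<nu> x)) (\<sigma> v))"
    have u': "unifier atoms ms \<tau>'"
      using mgu unifier_comp unfolding mgu_def \<tau>'_def by blast
    have a': "a = map (\<lambda>x. \<tau>' (Inl x)) xs" using a by (simp add: \<tau>'_def)
    have b': "\<forall>i<length ms. \<exists>cs\<in>E (m_view (ms ! i)).
          map (\<lambda>z. \<tau>' (Inr (i, z))) (m_vars (ms ! i)) = map Cst cs"
      using b by (simp add: \<tau>'_def)
    show "a \<in> G xs atoms ms E" unfolding G_def mem_Collect_eq
      apply (rule exI[of _ \<tau>'])
      using u' a' b' by blast
  qed
next
  show "G xs atoms ms E \<subseteq> rule_ans E (unf_rule xs ms \<sigma>)"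
  proof
    fix a assume "a \<in> G xs atoms ms E"
    then obtain \<tau> where a: "a = map (\<lambda>x. \<tau> (Inl x)) xs" and u: "unifier atoms ms \<tau>"
      and b: "\<forall>i<length ms. \<exists>cs\<in>E (m_view (ms ! i)).
          map (\<lambda>z. \<tau> (Inr (i, z))) (m_vars (ms ! i)) = map Cst cs"
      unfolding G_def by auto
    obtain \<theta> where th: "\<forall>v. \<tau> v = subst \<theta> (\<sigma> v)" using mgu u unfolding mgu_def by blast
    define \<nu> where "\<nu> = (\<lambda>y. case \<theta> y of Cst c \<Rightarrow> c | _ \<Rightarrow> undefined)"
    have B: "subst (\<lambda>x. Cst (\<nu> x)) (\<sigma> (Inr (i, z))) = \<tau> (Inr (i, z))"
      if iz: "i < length ms" "z \<in> set (m_vars (ms ! i))" for i z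
    proof -
      obtain cs where "map (\<lambda>z. \<tau> (Inr (i, z))) (m_vars (ms ! i)) = map Cst cs"
        using b[rule_format, OF iz(1)] by blast
      moreover have "\<tau> (Inr (i, z)) \<in> set (map (\<lambda>z. \<tau> (Inr (i, z))) (m_vars (ms ! i)))"
        using iz(2) by simp
      ultimately have "\<tau> (Inr (i, z)) \<in> set (map Cst cs)" by simp
      then obtain c where c: "\<tau> (Inr (i, z)) = Cst c" by auto
      then have sc: "subst \<theta> (\<sigma> (Inr (i, z))) = Cst c" using th by simp
      have "\<theta> y = Cst c" if "y \<in> tvars (\<sigma> (Inr (i, z)))" for y
        using subst_Cst[OF sc that] .
      then have "subst (\<lambda>x. Cst (\<nu> x)) (\<sigma> (Inr (i, z))) = subst \<theta> (\<sigma> (Inr (i, z)))"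
        by (intro subst_cong) (simp add: \<nu>_def)
      then show ?thesis using th by simp
    qed
    have C: "subst (\<lambda>x. Cst (\<nu> x)) (\<sigma> (Inl x)) = \<tau> (Inl x)" if xx: "x \<in> set xs" for x
    proof -
      obtain i f ys where i: "i < length ms" "(f, ys) \<in> set (m_head (ms ! i))"
        and s: "\<sigma> (Inl x) = Fn f (map (\<lambda>y. \<sigma> (Inr (i, y))) ys)"
      proof -
        have u0: "unifier atoms ms \<sigma>" using mgu unfolding mgu_def by simp
        have xin: "x \<in> (\<Union>a\<in>set atoms. set (snd a))" using xx xs by blast
        show ?thesis using unifier_Inl[OF u0 xin] that by blast
      qed
      have "ms ! i \<in> set ms" using i(1) by (rule nth_mem)
      then have "heads_ok (ms ! i)" using ok by blast
      then have hk: "\<forall>(f, ys)\<in>set (m_head (ms ! i)). set ys \<subseteq> set (m_vars (ms ! i))"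
        unfolding heads_ok_def .
      have ys: "set ys \<subseteq> set (m_vars (ms ! i))" using bspec[OF hk i(2)] by simp
      have "\<tau> (Inl x) = subst \<theta> (\<sigma> (Inl x))" using th by simp
      also have "\<dots> = Fn f (map (\<lambda>y. subst \<theta> (\<sigma> (Inr (i, y)))) ys)" using s by simp
      also have "\<dots> = Fn f (map (\<lambda>y. subst (\<lambda>x. Cst (\<nu> x)) (\<sigma> (Inr (i, y)))) ys)"
        using B[OF i(1)] ys th by (auto intro!: map_cong)
      also have "\<dots> = subst (\<lambda>x. Cst (\<nu> x)) (\<sigma> (Inl x))" using s by simp
      finally show ?thesis by simp
    qed
    have "a = map (\<lambda>x. subst (\<lambda>x. Cst (\<nu> x)) (\<sigma> (Inl x))) xs" using C by (auto simp: a intro!: map_cong)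
    moreover have "\<forall>i<length ms. \<exists>cs\<in>E (m_view (ms ! i)).
          map (\<lambda>z. subst (\<lambda>x. Cst (\<nu> x)) (\<sigma> (Inr (i, z)))) (m_vars (ms ! i)) = (map Cst cs :: ('f,'c,'v) utm list)"
    proof (intro allI impI)
      fix i assume i: "i < length ms"
      then obtain cs where cs: "cs \<in> E (m_view (ms ! i))"
        "map (\<lambda>z. \<tau> (Inr (i, z))) (m_vars (ms ! i)) = map Cst cs" using b by blast
      have "map (\<lambda>z. subst (\<lambda>x. Cst (\<nu> x)) (\<sigma> (Inr (i, z)))) (m_vars (ms ! i))
          = map (\<lambda>z. \<tau> (Inr (i, z))) (m_vars (ms ! i))" using B[OF i] by (auto intro!: map_cong)
      then show "\<exists>cs\<in>E (m_view (ms ! i)).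
          map (\<lambda>z. subst (\<lambda>x. Cst (\<nu> x)) (\<sigma> (Inr (i, z)))) (m_vars (ms ! i)) = (map Cst cs :: ('f,'c,'v) utm list)"
        using cs by auto
    qed
    ultimately show "a \<in> rule_ans E (unf_rule xs ms \<sigma>)"
      unfolding rule_ans_def unf_rule_def mem_Collect_eq fst_conv snd_conv
      by (intro exI[of _ \<nu>] conjI) (simp_all add: comp_def atLeast0LessThan)
  qed
qed


lemma rename_unf_rule:
  fixes \<sigma>1 \<sigma>2 :: "'v + nat \<times> nat \<Rightarrow> ('f,'c,'v) utm"
  assumes "\<forall>x\<in>set xs. subst (\<lambda>y. Var (\<rho> y)) (\<sigma>1 (Inl x)) = \<sigma>2 (Inl x)"
    and "\<forall>i<length ms. \<forall>z\<in>set (m_vars (ms ! i)).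
           subst (\<lambda>y. Var (\<rho> y)) (\<sigma>1 (Inr (i, z))) = \<sigma>2 (Inr (i, z))"
  shows "rename_rule \<rho> (unf_rule xs ms \<sigma>1) = unf_rule xs ms \<sigma>2"
  using assms unfolding rename_rule_def unf_rule_def by (auto intro!: map_cong)

lemma Var_inj_helper: "subst \<theta> t = Var y \<Longrightarrow> \<exists>z. t = Var z \<and> \<theta> z = Var y"
  by (cases t) auto

lemma mgu_variant:
  fixes \<sigma>1 \<sigma>2 :: "'v + nat \<times> nat \<Rightarrow> ('f,'c,'v) utm"
  assumes m1: "mgu atoms ms \<sigma>1" and m2: "mgu atoms ms \<sigma>2"
  shows "variant (unf_rule xs ms \<sigma>1) (unf_rule xs ms \<sigma>2)"
proof -
  obtain \<theta>a where ta: "\<forall>v. \<sigma>2 v = subst \<theta>a (\<sigma>1 v)" using m1 m2 unfolding mgu_def by blast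
  obtain \<theta>b where tb: "\<forall>v. \<sigma>1 v = subst \<theta>b (\<sigma>2 v)" using m1 m2 unfolding mgu_def by blast
  define X where "X = Inl ` set xs \<union> (\<Union>i<length ms. (\<lambda>z. Inr (i, z)) ` set (m_vars (ms ! i)))"
  define V where "V = (\<Union>v\<in>X. tvars (\<sigma>1 v))"
  have fX: "finite X" unfolding X_def by auto
  have fV: "finite V" unfolding V_def using fX finite_tvars by blast
  have id: "subst \<theta>b (\<theta>a y) = Var y" if "y \<in> tvars (\<sigma>1 v)" for y v
  proof -
    have "\<sigma>1 v = subst \<theta>b (subst \<theta>a (\<sigma>1 v))" using ta tb by metis
    then have "\<sigma>1 v = subst (\<lambda>x. subst \<theta>b (\<theta>a x)) (\<sigma>1 v)"
      by (simp only: subst_comp)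
    from subst_id[OF this[symmetric] that] show ?thesis .
  qed
  define g where "g = (\<lambda>y. case \<theta>a y of Var z \<Rightarrow> z | _ \<Rightarrow> y)"
  have gV: "\<theta>a y = Var (g y) \<and> \<theta>b (g y) = Var y" if yV: "y \<in> V" for y
  proof -
    obtain v where "y \<in> tvars (\<sigma>1 v)" using yV unfolding V_def by blast
    from Var_inj_helper[OF id[OF this]] obtain z where "\<theta>a y = Var z" "\<theta>b z = Var y" by blast
    then show ?thesis unfolding g_def by simp
  qed
  have "inj_on g V"
  proof (rule inj_onI)
    fix y1 y2 assume "y1 \<in> V" "y2 \<in> V" "g y1 = g y2"
    then show "y1 = y2" using gV by (metis tm.inject(1))
  qed
  from extend_bij[OF fV this] obtain \<rho> where r: "bij \<rho>" "\<forall>y\<in>V. \<rho> y = g y" by blast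
  have key: "subst (\<lambda>y. Var (\<rho> y)) (\<sigma>1 v) = \<sigma>2 v" if vX: "v \<in> X" for v
  proof -
    have "subst (\<lambda>y. Var (\<rho> y)) (\<sigma>1 v) = subst \<theta>a (\<sigma>1 v)"
    proof (rule subst_cong)
      fix y assume "y \<in> tvars (\<sigma>1 v)"
      then have "y \<in> V" unfolding V_def using vX by blast
      then show "Var (\<rho> y) = \<theta>a y" using gV r(2) by simp
    qed
    then show ?thesis using ta by simp
  qed
  have "rename_rule \<rho> (unf_rule xs ms \<sigma>1) = unf_rule xs ms \<sigma>2"
    by (rule rename_unf_rule) (use key in \<open>auto simp: X_def\<close>)
  then show ?thesis unfolding variant_def using r(1) by metis
qed


lemma canon_fst: "map fst (canon ar k fs) = fs"
  by (induction fs arbitrary: k) auto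

lemma length_canon: "length (canon ar k fs) = length fs"
  by (induction fs arbitrary: k) auto

lemma canon_concat: "concat (map snd (canon ar k fs)) = [k..<k + sum_list (map ar fs)]"
proof (induction fs arbitrary: k)
  case (Cons f fs)
  then show ?case using upt_add_eq_append[of k "k + ar f" "sum_list (map ar fs)"]
    by (simp add: add.assoc)
qed simp

lemma canon_bound: "(f, js) \<in> set (canon ar k fs) \<Longrightarrow> j \<in> set js \<Longrightarrow> k \<le> j \<and> j < k + sum_list (map ar fs)"
proof (induction fs arbitrary: k)
  case (Cons g fs)
  then show ?case by fastforce
qed simp

lemma canon_map:
  assumes "\<forall>(f, ys)\<in>set hs. length ys = ar f"
  shows "map (\<lambda>(f, js). (f, map (\<lambda>j. concat (map snd hs) ! (j - k)) js)) (canon ar k (map fst hs)) = hs"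
  using assms
proof (induction hs arbitrary: k)
  case Nil
  then show ?case by simp
next
  case (Cons h hs)
  obtain f ys where h: "h = (f, ys)" by fastforce
  have ly: "length ys = ar f" using Cons.prems h by auto
  have 1: "map (\<lambda>j. (ys @ concat (map snd hs)) ! (j - k)) [k..<k + ar f] = ys"
    using ly by (auto intro!: nth_equalityI simp: nth_append)
  have 2: "map (\<lambda>(g, js). (g, map (\<lambda>j. (ys @ concat (map snd hs)) ! (j - k)) js))
        (canon ar (k + ar f) (map fst hs))
      = map (\<lambda>(g, js). (g, map (\<lambda>j. concat (map snd hs) ! (j - (k + ar f))) js))
        (canon ar (k + ar f) (map fst hs))"
  proof (rule map_cong[OF refl])
    fix p assume p: "p \<in> set (canon ar (k + ar f) (map fst hs))"
    obtain g js where gj: "p = (g, js)" by fastforce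
    have "\<forall>j\<in>set js. k + ar f \<le> j" using canon_bound[OF p[unfolded gj]] by blast
    then show "(case p of (g, js) \<Rightarrow> (g, map (\<lambda>j. (ys @ concat (map snd hs)) ! (j - k)) js)) =
          (case p of (g, js) \<Rightarrow> (g, map (\<lambda>j. concat (map snd hs) ! (j - (k + ar f))) js))"
      using gj ly by (auto simp: nth_append intro!: map_cong)
  qed
  show ?case using 1 2 Cons h by simp
qed

lemma sum_ar:
  assumes "\<forall>(f, ys)\<in>set hs. length ys = ar f"
  shows "sum_list (map ar (map fst hs)) = length (concat (map snd hs))"
proof -
  have "map ar (map fst hs) = map length (map snd hs)" using assms by (auto intro!: map_cong)
  then show ?thesis by (simp only: length_concat)
qed


definition norm_m :: "('f \<Rightarrow> nat) \<Rightarrow> ('l, 'f, 'vn) mapping \<Rightarrow> bool" where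
  "norm_m ar m \<longleftrightarrow> m_vars m = concat (map snd (m_head m)) \<and> distinct (m_vars m) \<and>
             (\<forall>(f, ys)\<in>set (m_head m). length ys = ar f)"

lemma wrap_fields:
  assumes "norm_m ar m"
  shows "m_pred (wrap_mapping ar (sign m)) = m_pred m"
    "m_head (wrap_mapping ar (sign m)) = canon ar 0 (map fst (m_head m))"
    "m_vars (wrap_mapping ar (sign m)) = [0..<length (m_vars m)]"
    "m_view (wrap_mapping ar (sign m)) = sign m"
  using assms sum_ar[of "m_head m" ar]
  by (auto simp: wrap_mapping_def sign_def canon_concat norm_m_def)

lemma perm_exists:
  fixes mv :: "nat list"
  assumes "distinct mv"
  shows "\<exists>p. bij p \<and> (\<forall>j<length mv. p j = mv ! j)"
proof -
  have "inj_on (nth mv) {..<length mv}" using assms by (intro inj_on_nth) auto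
  from extend_bij[OF _ this] show ?thesis by auto
qed

lemma head_transfer:
  assumes nm: "norm_m ar m" and k: "k < length (m_head m)"
    and R: "\<forall>j<length (m_vars m). R (Inr (i, j)) = Inr (i, m_vars m ! j)"
  shows "subst (\<lambda>x. Var (R x)) (head_term i (canon ar 0 (map fst (m_head m)) ! k))
         = head_term i (m_head m ! k)"
proof -
  define hs where "hs = m_head m"
  define mv where "mv = m_vars m"
  have mv: "mv = concat (map snd hs)" "\<forall>(f, ys)\<in>set hs. length ys = ar f"
    using nm unfolding norm_m_def hs_def mv_def by auto
  obtain f js where fj: "canon ar 0 (map fst hs) ! k = (f, js)" by fastforce
  have kk: "k < length (canon ar 0 (map fst hs))" using k by (simp add: length_canon hs_def)
  have "hs ! k = map (\<lambda>(f, js). (f, map (\<lambda>j. mv ! (j - 0)) js)) (canon ar 0 (map fst hs)) ! k"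
    using canon_map[OF mv(2), of 0] mv(1) by simp
  also have "\<dots> = (f, map (\<lambda>j. mv ! j) js)" using kk fj by simp
  finally have hk: "hs ! k = (f, map (\<lambda>j. mv ! j) js)" .
  have "(f, js) \<in> set (canon ar 0 (map fst hs))" using kk fj by (metis nth_mem)
  then have "\<forall>j\<in>set js. j < length mv"
    using canon_bound sum_ar[OF mv(2)] mv(1) by fastforce
  then have "map (\<lambda>y. Var (R (Inr (i, y)))) js = map (\<lambda>y. Var (Inr (i, y))) (map (\<lambda>j. mv ! j) js)"
    using R unfolding mv_def by auto
  then show ?thesis using fj hk unfolding hs_def[symmetric] head_term_def by simp
qed

lemma wrap_transfer:
  fixes ms :: "('l, 'f, 'vn) mapping list" and atoms :: "('l \<times> 'v list) list"
  assumes nm: "\<forall>m\<in>set ms. norm_m ar m"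
  defines "wms \<equiv> map (\<lambda>m. wrap_mapping ar (sign m)) ms"
  shows "\<exists>R :: 'v + nat \<times> nat \<Rightarrow> 'v + nat \<times> nat. bij R \<and> (\<forall>x. R (Inl x) = Inl x) \<and>
     (\<forall>\<tau> :: 'v + nat \<times> nat \<Rightarrow> ('f, 'c, 'v) utm.
        unifier atoms ms \<tau> \<longleftrightarrow> unifier atoms wms (\<lambda>x. \<tau> (R x))) \<and>
     (\<forall>i<length ms. \<forall>\<tau> :: 'v + nat \<times> nat \<Rightarrow> ('f, 'c, 'v) utm.
        map (\<lambda>z. \<tau> (R (Inr (i, z)))) (m_vars (wms ! i)) = map (\<lambda>z. \<tau> (Inr (i, z))) (m_vars (ms ! i)))"
proof -
  have "\<forall>i. \<exists>p. bij p \<and> (i < length ms \<longrightarrow> (\<forall>j<length (m_vars (ms ! i)). p j = m_vars (ms ! i) ! j))"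
  proof
    fix i
    show "\<exists>p. bij p \<and> (i < length ms \<longrightarrow> (\<forall>j<length (m_vars (ms ! i)). p j = m_vars (ms ! i) ! j))"
    proof (cases "i < length ms")
      case True
      then have "distinct (m_vars (ms ! i))" using nm nth_mem unfolding norm_m_def by blast
      then show ?thesis using perm_exists by blast
    next
      case False
      then show ?thesis using bij_id by blast
    qed
  qed
  then obtain P where P: "\<And>i. bij (P i)"
    "\<And>i j. i < length ms \<Longrightarrow> j < length (m_vars (ms ! i)) \<Longrightarrow> P i j = m_vars (ms ! i) ! j"
    by metis
  define R :: "'v + nat \<times> nat \<Rightarrow> 'v + nat \<times> nat" where
    "R = (\<lambda>v. case v of Inl x \<Rightarrow> Inl x | Inr (i, j) \<Rightarrow> Inr (i, P i j))"
  define R' :: "'v + nat \<times> nat \<Rightarrow> 'v + nat \<times> nat" where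
    "R' = (\<lambda>v. case v of Inl x \<Rightarrow> Inl x | Inr (i, j) \<Rightarrow> Inr (i, inv (P i) j))"
  have "R' \<circ> R = id" unfolding R_def R'_def
    by (auto simp: fun_eq_iff bij_is_inj[OF P(1)] split: sum.splits)
  moreover have "R \<circ> R' = id" unfolding R_def R'_def
    by (auto simp: fun_eq_iff bij_is_surj[OF P(1)] surj_f_inv_f split: sum.splits)
  ultimately have bR: "bij R" by (rule o_bij)
  have RI: "\<forall>j<length (m_vars (ms ! i)). R (Inr (i, j)) = Inr (i, m_vars (ms ! i) ! j)"
    if "i < length ms" for i
    using P(2)[OF that] unfolding R_def by simp
  have nmi: "norm_m ar (ms ! i)" if "i < length ms" for i using nm that by simp
  have wi: "wms ! i = wrap_mapping ar (sign (ms ! i))" if "i < length ms" for i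
    using that unfolding wms_def by simp
  have U: "unifier atoms ms \<tau> \<longleftrightarrow> unifier atoms wms (\<lambda>x. \<tau> (R x))"
    for \<tau> :: "'v + nat \<times> nat \<Rightarrow> ('f, 'c, 'v) utm"
  proof -
    have ht: "subst (\<lambda>x. \<tau> (R x)) (head_term i (m_head (wms ! i) ! k)) = subst \<tau> (head_term i (m_head (ms ! i) ! k))"
      if "i < length ms" "k < length (m_head (ms ! i))" for i k
    proof -
      have "subst (\<lambda>x. \<tau> (R x)) (head_term i (m_head (wms ! i) ! k))
          = subst \<tau> (subst (\<lambda>x. Var (R x)) (head_term i (canon ar 0 (map fst (m_head (ms ! i))) ! k)))"
        using wi[OF that(1)] wrap_fields(2)[OF nmi[OF that(1)]] by (simp add: subst_comp)
      also have "\<dots> = subst \<tau> (head_term i (m_head (ms ! i) ! k))"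
        by (subst head_transfer[OF nmi[OF that(1)] that(2) RI[OF that(1)]]) (rule refl)
      finally show ?thesis .
    qed
    have pr: "m_pred (wms ! i) = m_pred (ms ! i)" "length (m_head (wms ! i)) = length (m_head (ms ! i))"
      if "i < length ms" for i
      using wi[OF that] wrap_fields[OF nmi[OF that]] by (auto simp: length_canon)
    show ?thesis unfolding unifier_def
      using pr ht by (auto simp: R_def wms_def)
  qed
  have B: "map (\<lambda>z. \<tau> (R (Inr (i, z)))) (m_vars (wms ! i)) = map (\<lambda>z. \<tau> (Inr (i, z))) (m_vars (ms ! i))"
    if "i < length ms" for i and \<tau> :: "'v + nat \<times> nat \<Rightarrow> ('f, 'c, 'v) utm"
  proof -
    have "map (\<lambda>z. \<tau> (R (Inr (i, z)))) (m_vars (wms ! i))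
        = map (\<lambda>z. \<tau> (R (Inr (i, z)))) [0..<length (m_vars (ms ! i))]"
      using wi[OF that] wrap_fields(3)[OF nmi[OF that]] by simp
    also have "\<dots> = map (\<lambda>z. \<tau> (Inr (i, z))) (map (\<lambda>j. m_vars (ms ! i) ! j) [0..<length (m_vars (ms ! i))])"
      using RI[OF that] by simp
    also have "\<dots> = map (\<lambda>z. \<tau> (Inr (i, z))) (m_vars (ms ! i))" by (simp add: map_nth)
    finally show ?thesis .
  qed
  show ?thesis using bR U B by (intro exI[of _ R]) (auto simp: R_def)
qed


lemma mgu_transfer:
  fixes R :: "'v + nat \<times> nat \<Rightarrow> 'v + nat \<times> nat"
    and \<sigma> :: "'v + nat \<times> nat \<Rightarrow> ('f, 'c, 'v) utm"
  assumes bR: "bij R"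
    and U: "\<forall>\<tau> :: 'v + nat \<times> nat \<Rightarrow> ('f, 'c, 'v) utm.
        unifier atoms ms \<tau> \<longleftrightarrow> unifier atoms wms (\<lambda>x. \<tau> (R x))"
  shows "mgu atoms ms \<sigma> \<longleftrightarrow> mgu atoms wms (\<lambda>x. \<sigma> (R x))"
proof
  assume m: "mgu atoms ms \<sigma>"
  show "mgu atoms wms (\<lambda>x. \<sigma> (R x))" unfolding mgu_def
  proof (intro conjI allI impI)
    show "unifier atoms wms (\<lambda>x. \<sigma> (R x))" using m U unfolding mgu_def by blast
  next
    fix \<tau>' :: "'v + nat \<times> nat \<Rightarrow> ('f, 'c, 'v) utm" assume u: "unifier atoms wms \<tau>'"
    have "(\<lambda>x. \<tau>' (inv R (R x))) = \<tau>'" using bij_is_inj[OF bR] by simp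
    then have "unifier atoms ms (\<lambda>x. \<tau>' (inv R x))" using U u by simp
    then obtain \<theta> where th: "\<forall>x. \<tau>' (inv R x) = subst \<theta> (\<sigma> x)" using m unfolding mgu_def by blast
    have "\<tau>' y = subst \<theta> (\<sigma> (R y))" for y
      using th[rule_format, of "R y"] bij_is_inj[OF bR] by simp
    then show "\<exists>\<theta>. \<forall>x. \<tau>' x = subst \<theta> (\<sigma> (R x))" by blast
  qed
next
  assume m: "mgu atoms wms (\<lambda>x. \<sigma> (R x))"
  show "mgu atoms ms \<sigma>" unfolding mgu_def
  proof (intro conjI allI impI)
    show "unifier atoms ms \<sigma>" using m U unfolding mgu_def by blast
  next
    fix \<tau> :: "'v + nat \<times> nat \<Rightarrow> ('f, 'c, 'v) utm" assume u: "unifier atoms ms \<tau>"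
    then have "unifier atoms wms (\<lambda>x. \<tau> (R x))" using U by blast
    then obtain \<theta> where th: "\<forall>x. \<tau> (R x) = subst \<theta> (\<sigma> (R x))" using m unfolding mgu_def by blast
    have "\<tau> y = subst \<theta> (\<sigma> y)" for y
      using th[rule_format, of "inv R y"] bij_is_surj[OF bR] by (simp add: surj_f_inv_f)
    then show "\<exists>\<theta>. \<forall>x. \<tau> x = subst \<theta> (\<sigma> x)" by blast
  qed
qed

lemma union_unf:
  fixes M' :: "('l, 'f, 'vn) mapping set" and E :: "'vn \<Rightarrow> 'c list set"
    and \<Pi> :: "('f, 'c, 'v, 'vn) rule set"
  assumes U: "is_unfolding xs atoms M' \<Pi>" and ok: "\<forall>m\<in>M'. heads_ok m"
    and xs: "set xs \<subseteq> (\<Union>a\<in>set atoms. set (snd a))"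
  shows "(\<Union>r\<in>\<Pi>. rule_ans E r) =
    (\<Union>ms\<in>{ms. set ms \<subseteq> M' \<and> (\<exists>\<sigma> :: 'v + nat \<times> nat \<Rightarrow> ('f, 'c, 'v) utm. mgu atoms ms \<sigma>)}.
       G xs atoms ms E)"
proof
  show "(\<Union>r\<in>\<Pi>. rule_ans E r) \<subseteq> (\<Union>ms\<in>{ms. set ms \<subseteq> M' \<and> (\<exists>\<sigma> :: 'v + nat \<times> nat \<Rightarrow> ('f, 'c, 'v) utm. mgu atoms ms \<sigma>)}.
       G xs atoms ms E)"
  proof
    fix a assume "a \<in> (\<Union>r\<in>\<Pi>. rule_ans E r)"
    then obtain r where r: "r \<in> \<Pi>" "a \<in> rule_ans E r" by blast
    then obtain u where u: "u \<in> unf_rules xs atoms M'" "variant u r"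
      using U unfolding is_unfolding_def by blast
    then obtain ms \<sigma> where ms: "u = unf_rule xs ms \<sigma>" "set ms \<subseteq> M'" "mgu atoms ms \<sigma>"
      unfolding unf_rules_def by blast
    have "rule_ans E r = rule_ans E u" using rule_ans_variant[OF u(2)] .
    also have "\<dots> = G xs atoms ms E" using rule_ans_mgu[OF ms(3) xs] ok ms(1,2) by blast
    finally show "a \<in> (\<Union>ms\<in>{ms. set ms \<subseteq> M' \<and> (\<exists>\<sigma> :: 'v + nat \<times> nat \<Rightarrow> ('f, 'c, 'v) utm. mgu atoms ms \<sigma>)}.
       G xs atoms ms E)" using r(2) ms by blast
  qed
next
  show "(\<Union>ms\<in>{ms. set ms \<subseteq> M' \<and> (\<exists>\<sigma> :: 'v + nat \<times> nat \<Rightarrow> ('f, 'c, 'v) utm. mgu atoms ms \<sigma>)}.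
       G xs atoms ms E) \<subseteq> (\<Union>r\<in>\<Pi>. rule_ans E r)"
  proof
    fix a assume "a \<in> (\<Union>ms\<in>{ms. set ms \<subseteq> M' \<and> (\<exists>\<sigma> :: 'v + nat \<times> nat \<Rightarrow> ('f, 'c, 'v) utm. mgu atoms ms \<sigma>)}.
       G xs atoms ms E)"
    then obtain ms and \<sigma> :: "'v + nat \<times> nat \<Rightarrow> ('f, 'c, 'v) utm"
      where ms: "set ms \<subseteq> M'" "mgu atoms ms \<sigma>" "a \<in> G xs atoms ms E" by blast
    have "unf_rule xs ms \<sigma> \<in> unf_rules xs atoms M'" unfolding unf_rules_def using ms by blast
    then obtain r where r: "r \<in> \<Pi>" "variant (unf_rule xs ms \<sigma>) r"
      using U unfolding is_unfolding_def by blast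
    have "rule_ans E r = rule_ans E (unf_rule xs ms \<sigma>)" using rule_ans_variant[OF r(2)] .
    also have "\<dots> = G xs atoms ms E" using rule_ans_mgu[OF ms(2) xs] ok ms(1) by blast
    finally show "a \<in> (\<Union>r\<in>\<Pi>. rule_ans E r)" using r(1) ms(3) by blast
  qed
qed


lemma wrap_mapping_simps:
  "m_pred (wrap_mapping ar s) = fst s" "m_head (wrap_mapping ar s) = canon ar 0 (snd s)"
  "m_view (wrap_mapping ar s) = s" "m_vars (wrap_mapping ar s) = concat (map snd (canon ar 0 (snd s)))"
  by (simp_all add: wrap_mapping_def)

lemma concat_heads: "\<forall>(f, ys)\<in>set L. set ys \<subseteq> set (concat (map snd L))"
  by (induction L) auto

lemma wrap_heads_ok0: "heads_ok (wrap_mapping ar s)"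
  unfolding heads_ok_def wrap_mapping_simps by (rule concat_heads)

lemma wrap_heads_ok: "m \<in> wrap ar M \<Longrightarrow> heads_ok m"
  unfolding wrap_def using wrap_heads_ok0 by blast

lemma canon_nth_fst: "k < length fs \<Longrightarrow> fst (canon ar j fs ! k) = fs ! k"
  by (metis canon_fst length_canon nth_map)

lemma G_disj:
  fixes E' :: "'l \<times> 'f list \<Rightarrow> 'c list set" and w1 w2 :: "('l, 'f, 'l \<times> 'f list) mapping list"
    and atoms :: "('l \<times> 'v list) list"
  assumes w1: "set w1 \<subseteq> wrap ar M" and w2: "set w2 \<subseteq> wrap ar M" and ne: "w1 \<noteq> w2"
    and xs: "set xs = (\<Union>a\<in>set atoms. set (snd a))"
  shows "G xs atoms w1 E' \<inter> G xs atoms w2 E' = {}"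
proof (rule ccontr)
  assume "G xs atoms w1 E' \<inter> G xs atoms w2 E' \<noteq> {}"
  then obtain \<tau>1 \<tau>2 :: "'v + nat \<times> nat \<Rightarrow> ('f, 'c, 'v) utm" where
    u1: "unifier atoms w1 \<tau>1" and u2: "unifier atoms w2 \<tau>2"
    and eq: "map (\<lambda>x. \<tau>1 (Inl x)) xs = map (\<lambda>x. \<tau>2 (Inl x)) xs"
    unfolding G_def by auto
  have l: "length w1 = length atoms" "length w2 = length atoms"
    using u1 u2 unfolding unifier_def by auto
  then obtain i where i: "i < length atoms" "w1 ! i \<noteq> w2 ! i"
    using ne nth_equalityI by metis
  obtain s1 where s1: "w1 ! i = wrap_mapping ar s1"
    using w1 i l nth_mem unfolding wrap_def by (metis (no_types, lifting) image_iff subsetD)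
  obtain s2 where s2: "w2 ! i = wrap_mapping ar s2"
    using w2 i l nth_mem unfolding wrap_def by (metis (no_types, lifting) image_iff subsetD)
  have c1: "fst (atoms ! i) = fst s1" "length (snd (atoms ! i)) = length (snd s1)"
    and e1: "\<forall>k<length (snd (atoms ! i)). \<tau>1 (Inl (snd (atoms ! i) ! k))
             = subst \<tau>1 (head_term i (canon ar 0 (snd s1) ! k))"
    using u1 i unfolding unifier_def s1 by (auto simp: s1 wrap_mapping_simps length_canon)
  have c2: "fst (atoms ! i) = fst s2" "length (snd (atoms ! i)) = length (snd s2)"
    and e2: "\<forall>k<length (snd (atoms ! i)). \<tau>2 (Inl (snd (atoms ! i) ! k))
             = subst \<tau>2 (head_term i (canon ar 0 (snd s2) ! k))"
    using u2 i unfolding unifier_def s2 by (auto simp: s2 wrap_mapping_simps length_canon)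
  have "snd s1 \<noteq> snd s2" using i(2) s1 s2 c1 c2 by (metis prod_eq_iff)
  then obtain k where k: "k < length (snd (atoms ! i))" "snd s1 ! k \<noteq> snd s2 ! k"
    using c1 c2 nth_equalityI by metis
  define v where "v = snd (atoms ! i) ! k"
  have "atoms ! i \<in> set atoms" using i(1) by (rule nth_mem)
  moreover have "v \<in> set (snd (atoms ! i))" unfolding v_def using k(1) by (rule nth_mem)
  ultimately have "v \<in> set xs" unfolding xs by blast
  then have "\<tau>1 (Inl v) = \<tau>2 (Inl v)" using eq by (metis (mono_tags, lifting) map_eq_conv)
  moreover obtain ts1 where "\<tau>1 (Inl v) = Fn (snd s1 ! k) ts1"
    using e1 k c1 canon_nth_fst[of k "snd s1" ar 0] unfolding v_def head_term_def
    by (metis (no_types, lifting) subst.simps(3))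
  moreover obtain ts2 where "\<tau>2 (Inl v) = Fn (snd s2 ! k) ts2"
    using e2 k c2 canon_nth_fst[of k "snd s2" ar 0] unfolding v_def head_term_def
    by (metis (no_types, lifting) subst.simps(3))
  ultimately show False using k(2) by simp
qed

fun unCst :: "('f, 'c, 'x) tm \<Rightarrow> 'c" where
  "unCst (Cst c) = c"
| "unCst _ = undefined"

lemma G_finite:
  fixes E :: "'vn \<Rightarrow> 'c list set" and ms :: "('l, 'f, 'vn) mapping list"
    and atoms :: "('l \<times> 'v list) list"
  assumes fE: "\<forall>V. finite (E V)" and ok: "\<forall>m\<in>set ms. heads_ok m"
    and xs: "set xs \<subseteq> (\<Union>a\<in>set atoms. set (snd a))"
  shows "finite (G xs atoms ms E)"
proof -
  define C where "C = (\<Union>i<length ms. \<Union>cs\<in>E (m_view (ms ! i)). set cs)"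
  have fC: "finite C" unfolding C_def using fE by auto
  define H where "H = (\<Union>m\<in>set ms. set (m_head m))"
  have fH: "finite H" unfolding H_def by auto
  define T :: "('f, 'c, 'v) utm set" where
    "T = (\<Union>h\<in>H. (\<lambda>cs. Fn (fst h) (map Cst cs)) ` {cs. set cs \<subseteq> C \<and> length cs = length (snd h)})"
  have fT: "finite T" unfolding T_def using fH fC by (auto intro: finite_lists_length_eq)
  have "G xs atoms ms E \<subseteq> {l. set l \<subseteq> T \<and> length l = length xs}"
  proof
    fix a assume "a \<in> G xs atoms ms E"
    then obtain \<tau> where a: "a = map (\<lambda>x. \<tau> (Inl x)) xs" and u: "unifier atoms ms \<tau>"
      and b: "\<forall>i<length ms. \<exists>cs\<in>E (m_view (ms ! i)).
          map (\<lambda>z. \<tau> (Inr (i, z))) (m_vars (ms ! i)) = map Cst cs"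
      unfolding G_def by auto
    have "\<tau> (Inl x) \<in> T" if x: "x \<in> set xs" for x
    proof -
      have xin: "x \<in> (\<Union>a\<in>set atoms. set (snd a))" using x xs by blast
      obtain i f ys where i: "i < length ms" "(f, ys) \<in> set (m_head (ms ! i))"
        and s: "\<tau> (Inl x) = Fn f (map (\<lambda>y. \<tau> (Inr (i, y))) ys)"
        using unifier_Inl[OF u xin] by blast
      have "ms ! i \<in> set ms" using i(1) by (rule nth_mem)
      then have "heads_ok (ms ! i)" using ok by blast
      then have hk: "\<forall>(f, ys)\<in>set (m_head (ms ! i)). set ys \<subseteq> set (m_vars (ms ! i))"
        unfolding heads_ok_def .
      have ys: "set ys \<subseteq> set (m_vars (ms ! i))" using bspec[OF hk i(2)] by simp
      obtain cs where cs: "cs \<in> E (m_view (ms ! i))"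
        "map (\<lambda>z. \<tau> (Inr (i, z))) (m_vars (ms ! i)) = map Cst cs"
        using b i(1) by blast
      have yC: "\<exists>c. \<tau> (Inr (i, y)) = Cst c \<and> c \<in> C" if y: "y \<in> set ys" for y
      proof -
        have "\<tau> (Inr (i, y)) \<in> set (map (\<lambda>z. \<tau> (Inr (i, z))) (m_vars (ms ! i)))"
          using y ys by auto
        then have "\<tau> (Inr (i, y)) \<in> set (map Cst cs)" using cs(2) by simp
        then obtain c where "c \<in> set cs" "\<tau> (Inr (i, y)) = Cst c" by auto
        moreover have "c \<in> C" unfolding C_def using i(1) cs(1) \<open>c \<in> set cs\<close> by blast
        ultimately show ?thesis by blast
      qed
      define cs' where "cs' = map (\<lambda>y. unCst (\<tau> (Inr (i, y)))) ys"
      have "map (\<lambda>y. \<tau> (Inr (i, y))) ys = map Cst cs'"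
        unfolding cs'_def map_map comp_def by (intro map_cong refl) (metis yC unCst.simps(1))
      moreover have "set cs' \<subseteq> C" unfolding cs'_def by (auto dest!: yC)
      moreover have "length cs' = length ys" unfolding cs'_def by simp
      moreover have "(f, ys) \<in> H" unfolding H_def using i nth_mem by blast
      ultimately show ?thesis unfolding T_def using s by force
    qed
    then show "a \<in> {l. set l \<subseteq> T \<and> length l = length xs}" using a by auto
  qed
  moreover have "finite {l. set l \<subseteq> T \<and> length l = length xs}"
    using finite_lists_length_eq[OF fT] .
  ultimately show ?thesis by (rule finite_subset)
qed


lemma key_eq:
  fixes M :: "('l, 'f, 'vn) mapping set" and ext :: "'vn \<Rightarrow> 'c list set"
    and atoms :: "('l \<times> 'v list) list"
  assumes nm: "normal_mappings ar M"
  shows "(\<Union>ms\<in>{ms. set ms \<subseteq> M \<and> (\<exists>\<sigma> :: 'v + nat \<times> nat \<Rightarrow> ('f, 'c, 'v) utm. mgu atoms ms \<sigma>)}.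
           G xs atoms ms ext) =
         (\<Union>wms\<in>{wms. set wms \<subseteq> wrap ar M \<and> (\<exists>\<sigma> :: 'v + nat \<times> nat \<Rightarrow> ('f, 'c, 'v) utm. mgu atoms wms \<sigma>)}.
           G xs atoms wms (wrap_ext ext M))"
    (is "?L = ?R")
proof
  show "?L \<subseteq> ?R"
  proof
    fix a assume "a \<in> ?L"
    then obtain ms and \<sigma> :: "'v + nat \<times> nat \<Rightarrow> ('f, 'c, 'v) utm"
      where ms: "set ms \<subseteq> M" "mgu atoms ms \<sigma>" "a \<in> G xs atoms ms ext" by blast
    define wms where "wms = map (\<lambda>m. wrap_mapping ar (sign m)) ms"
    have nms: "\<forall>m\<in>set ms. norm_m ar m" using nm ms(1) unfolding normal_mappings_def norm_m_def by blast
    obtain R :: "'v + nat \<times> nat \<Rightarrow> 'v + nat \<times> nat" where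
      R: "bij R" "\<forall>x. R (Inl x) = Inl x"
      "\<forall>\<tau> :: 'v + nat \<times> nat \<Rightarrow> ('f, 'c, 'v) utm. unifier atoms ms \<tau> \<longleftrightarrow> unifier atoms wms (\<lambda>x. \<tau> (R x))"
      "\<forall>i<length ms. \<forall>\<tau> :: 'v + nat \<times> nat \<Rightarrow> ('f, 'c, 'v) utm.
        map (\<lambda>z. \<tau> (R (Inr (i, z)))) (m_vars (wms ! i)) = map (\<lambda>z. \<tau> (Inr (i, z))) (m_vars (ms ! i))"
      using wrap_transfer[OF nms, where atoms = atoms and 'c = 'c] unfolding wms_def by blast
    have sw: "set wms \<subseteq> wrap ar M" using ms(1) unfolding wms_def wrap_def by auto
    have mw: "mgu atoms wms (\<lambda>x. \<sigma> (R x))" using mgu_transfer[OF R(1) R(3)] ms(2) by blast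
    obtain \<tau> where a: "a = map (\<lambda>x. \<tau> (Inl x)) xs" and u: "unifier atoms ms \<tau>"
      and b: "\<forall>i<length ms. \<exists>cs\<in>ext (m_view (ms ! i)).
          map (\<lambda>z. \<tau> (Inr (i, z))) (m_vars (ms ! i)) = map Cst cs"
      using ms(3) unfolding G_def by auto
    have "a \<in> G xs atoms wms (wrap_ext ext M)"
    proof -
      have "unifier atoms wms (\<lambda>x. \<tau> (R x))" using u R(3) by blast
      moreover have "a = map (\<lambda>x. \<tau> (R (Inl x))) xs" using a R(2) by simp
      moreover have "\<forall>i<length wms. \<exists>cs\<in>wrap_ext ext M (m_view (wms ! i)).
          map (\<lambda>z. \<tau> (R (Inr (i, z)))) (m_vars (wms ! i)) = map Cst cs"
      proof (intro allI impI)
        fix i assume i: "i < length wms"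
        then have i': "i < length ms" unfolding wms_def by simp
        obtain cs where cs: "cs \<in> ext (m_view (ms ! i))"
          "map (\<lambda>z. \<tau> (Inr (i, z))) (m_vars (ms ! i)) = map Cst cs" using b i' by blast
        have "ms ! i \<in> M" using ms(1) i' nth_mem by blast
        then have "cs \<in> wrap_ext ext M (m_view (wms ! i))"
          using cs(1) i' unfolding wrap_ext_def wms_def by (auto simp: wrap_mapping_simps)
        then show "\<exists>cs\<in>wrap_ext ext M (m_view (wms ! i)).
          map (\<lambda>z. \<tau> (R (Inr (i, z)))) (m_vars (wms ! i)) = map Cst cs"
          using cs(2) R(4) i' by metis
      qed
      ultimately show ?thesis unfolding G_def mem_Collect_eq
        by (intro exI[of _ "\<lambda>x. \<tau> (R x)"]) blast
    qed
    then show "a \<in> ?R" using sw mw by blast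
  qed
next
  show "?R \<subseteq> ?L"
  proof
    fix a assume "a \<in> ?R"
    then obtain wms and \<sigma>w :: "'v + nat \<times> nat \<Rightarrow> ('f, 'c, 'v) utm"
      where wms: "set wms \<subseteq> wrap ar M" "mgu atoms wms \<sigma>w" "a \<in> G xs atoms wms (wrap_ext ext M)" by blast
    obtain \<tau> where a: "a = map (\<lambda>x. \<tau> (Inl x)) xs" and u: "unifier atoms wms \<tau>"
      and b: "\<forall>i<length wms. \<exists>cs\<in>wrap_ext ext M (m_view (wms ! i)).
          map (\<lambda>z. \<tau> (Inr (i, z))) (m_vars (wms ! i)) = map Cst cs"
      using wms(3) unfolding G_def by auto
    have "\<forall>i<length wms. \<exists>m. m \<in> M \<and> wms ! i = wrap_mapping ar (sign m) \<and>
       (\<exists>cs\<in>ext (m_view m). map (\<lambda>z. \<tau> (Inr (i, z))) (m_vars (wms ! i)) = map Cst cs)"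
    proof (intro allI impI)
      fix i assume i: "i < length wms"
      obtain cs where cs: "cs \<in> wrap_ext ext M (m_view (wms ! i))"
        "map (\<lambda>z. \<tau> (Inr (i, z))) (m_vars (wms ! i)) = map Cst cs" using b i by blast
      obtain m where m: "m \<in> M" "sign m = m_view (wms ! i)" "cs \<in> ext (m_view m)"
        using cs(1) unfolding wrap_ext_def by blast
      have "wms ! i \<in> wrap ar M" using wms(1) i nth_mem by blast
      then obtain s where "wms ! i = wrap_mapping ar s" unfolding wrap_def by blast
      then have "wms ! i = wrap_mapping ar (sign m)" using m(2) by (simp add: wrap_mapping_simps)
      then show "\<exists>m. m \<in> M \<and> wms ! i = wrap_mapping ar (sign m) \<and>
       (\<exists>cs\<in>ext (m_view m). map (\<lambda>z. \<tau> (Inr (i, z))) (m_vars (wms ! i)) = map Cst cs)"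
        using m cs(2) by blast
    qed
    then obtain ms where ms: "length ms = length wms" "\<forall>i<length wms. ms ! i \<in> M \<and>
       wms ! i = wrap_mapping ar (sign (ms ! i)) \<and>
       (\<exists>cs\<in>ext (m_view (ms ! i)). map (\<lambda>z. \<tau> (Inr (i, z))) (m_vars (wms ! i)) = map Cst cs)"
      unfolding Skolem_list_nth by blast
    have wdef: "wms = map (\<lambda>m. wrap_mapping ar (sign m)) ms"
      using ms by (intro nth_equalityI) auto
    have sm: "set ms \<subseteq> M" using ms by (metis in_set_conv_nth subsetI)
    have nms: "\<forall>m\<in>set ms. norm_m ar m" using nm sm unfolding normal_mappings_def norm_m_def by blast
    obtain R :: "'v + nat \<times> nat \<Rightarrow> 'v + nat \<times> nat" where
      R: "bij R" "\<forall>x. R (Inl x) = Inl x"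
      "\<forall>\<tau> :: 'v + nat \<times> nat \<Rightarrow> ('f, 'c, 'v) utm. unifier atoms ms \<tau> \<longleftrightarrow> unifier atoms wms (\<lambda>x. \<tau> (R x))"
      "\<forall>i<length ms. \<forall>\<tau> :: 'v + nat \<times> nat \<Rightarrow> ('f, 'c, 'v) utm.
        map (\<lambda>z. \<tau> (R (Inr (i, z)))) (m_vars (wms ! i)) = map (\<lambda>z. \<tau> (Inr (i, z))) (m_vars (ms ! i))"
      using wrap_transfer[OF nms, where atoms = atoms and 'c = 'c] unfolding wdef by blast
    have iR: "inv R (R x) = x" for x using bij_is_inj[OF R(1)] by simp
    have iRl: "inv R (Inl x) = Inl x" for x using iR[of "Inl x"] R(2) by simp
    define \<tau>0 where "\<tau>0 = (\<lambda>x. \<tau> (inv R x))"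
    have t0: "(\<lambda>x. \<tau>0 (R x)) = \<tau>" unfolding \<tau>0_def iR by simp
    define \<sigma>0 where "\<sigma>0 = (\<lambda>x. \<sigma>w (inv R x))"
    have s0: "(\<lambda>x. \<sigma>0 (R x)) = \<sigma>w" unfolding \<sigma>0_def iR by simp
    have mm: "mgu atoms ms \<sigma>0" using mgu_transfer[OF R(1) R(3), of \<sigma>0] s0 wms(2) by simp
    have "a \<in> G xs atoms ms ext"
    proof -
      have "unifier atoms ms \<tau>0" using R(3) t0 u by simp
      moreover have "a = map (\<lambda>x. \<tau>0 (Inl x)) xs" using a unfolding \<tau>0_def iRl by simp
      moreover have "\<forall>i<length ms. \<exists>cs\<in>ext (m_view (ms ! i)).
          map (\<lambda>z. \<tau>0 (Inr (i, z))) (m_vars (ms ! i)) = map Cst cs"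
      proof (intro allI impI)
        fix i assume i: "i < length ms"
        have "map (\<lambda>z. \<tau>0 (Inr (i, z))) (m_vars (ms ! i)) = map (\<lambda>z. \<tau>0 (R (Inr (i, z)))) (m_vars (wms ! i))"
          using R(4) i by metis
        also have "\<dots> = map (\<lambda>z. \<tau> (Inr (i, z))) (m_vars (wms ! i))" using t0 by metis
        finally show "\<exists>cs\<in>ext (m_view (ms ! i)).
          map (\<lambda>z. \<tau>0 (Inr (i, z))) (m_vars (ms ! i)) = map Cst cs"
          using ms(2) i ms(1) by metis
      qed
      ultimately show ?thesis unfolding G_def mem_Collect_eq
        by (intro exI[of _ \<tau>0]) blast
    qed
    then show "a \<in> ?L" using sm mm by blast
  qed
qed


theorem theorem5:
  fixes M :: "('l, 'f, 'vn) mapping set"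
    and ext :: "'vn \<Rightarrow> 'c list set"
    and ar :: "'f \<Rightarrow> nat"
    and xs :: "'v list"
    and atoms :: "('l \<times> 'v list) list"
    and \<Pi> :: "('f, 'c, 'v, 'vn) rule set"
    and \<Pi>w :: "('f, 'c, 'v, 'l \<times> 'f list) rule set"
  assumes "finite M"
    and "\<forall>V. finite (ext V)"
    and "normal_mappings ar M"
    and "set xs = (\<Union>a\<in>set atoms. set (snd a))"
    and "is_unfolding xs atoms M \<Pi>"
    and "is_unfolding xs atoms (wrap ar M) \<Pi>w"
  shows "card (unf_ans ext \<Pi>) = (\<Sum>r\<in>\<Pi>w. card (rule_ans (wrap_ext ext M) r))"
proof -
  note fM = assms(1) and fext = assms(2) and nm = assms(3) and xs = assms(4)
    and UM = assms(5) and UW = assms(6)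
  define W where "W = wrap_ext ext M"
  have xs': "set xs \<subseteq> (\<Union>a\<in>set atoms. set (snd a))" using xs by simp
  have okM: "\<forall>m\<in>M. heads_ok m"
    using nm concat_heads unfolding normal_mappings_def heads_ok_def by metis
  have okW: "\<forall>m\<in>wrap ar M. heads_ok m" using wrap_heads_ok by blast
  have fW: "\<forall>s. finite (W s)"
  proof
    fix s
    have "finite {m \<in> M. sign m = s}" using fM by simp
    then show "finite (W s)" unfolding W_def wrap_ext_def using fext by blast
  qed
  have L: "unf_ans ext \<Pi> = (\<Union>r\<in>\<Pi>w. rule_ans W r)"
    unfolding unf_ans_def W_def
    using union_unf[OF UM okM xs'] union_unf[OF UW okW xs'] key_eq[OF nm] by simp
  define P where "P = (\<lambda>r w. set w \<subseteq> wrap ar M \<and> (\<exists>\<sigma> :: 'v + nat \<times> nat \<Rightarrow> ('f, 'c, 'v) utm.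
        mgu atoms w \<sigma> \<and> variant (unf_rule xs w \<sigma>) r))"
  define wf where "wf = (\<lambda>r. SOME w. P r w)"
  have wfP: "P r (wf r)" if rr: "r \<in> \<Pi>w" for r
  proof -
    obtain u where u: "u \<in> unf_rules xs atoms (wrap ar M)" "variant u r"
      using UW rr unfolding is_unfolding_def by blast
    then obtain w and \<sigma> :: "'v + nat \<times> nat \<Rightarrow> ('f, 'c, 'v) utm"
      where "u = unf_rule xs w \<sigma>" "set w \<subseteq> wrap ar M" "mgu atoms w \<sigma>"
      unfolding unf_rules_def by blast
    then have "P r w" unfolding P_def using u(2) by blast
    then show ?thesis unfolding wf_def by (rule someI)
  qed
  have ansG: "rule_ans W r = G xs atoms (wf r) W" if rr: "r \<in> \<Pi>w" for r
  proof -
    obtain \<sigma> :: "'v + nat \<times> nat \<Rightarrow> ('f, 'c, 'v) utm"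
      where s: "mgu atoms (wf r) \<sigma>" "variant (unf_rule xs (wf r) \<sigma>) r"
      using wfP[OF rr] unfolding P_def by blast
    have ok: "\<forall>m\<in>set (wf r). heads_ok m" using wfP[OF rr] okW unfolding P_def by blast
    show ?thesis using rule_ans_variant[OF s(2)] rule_ans_mgu[OF s(1) xs' ok] by simp
  qed
  have inj: "inj_on wf \<Pi>w"
  proof (rule inj_onI)
    fix r1 r2 assume r: "r1 \<in> \<Pi>w" "r2 \<in> \<Pi>w" "wf r1 = wf r2"
    obtain \<sigma>1 :: "'v + nat \<times> nat \<Rightarrow> ('f, 'c, 'v) utm"
      where s1: "mgu atoms (wf r1) \<sigma>1" "variant (unf_rule xs (wf r1) \<sigma>1) r1"
      using wfP[OF r(1)] unfolding P_def by blast
    obtain \<sigma>2 :: "'v + nat \<times> nat \<Rightarrow> ('f, 'c, 'v) utm"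
      where s2: "mgu atoms (wf r1) \<sigma>2" "variant (unf_rule xs (wf r1) \<sigma>2) r2"
      using wfP[OF r(2)] r(3) unfolding P_def by auto
    have "variant (unf_rule xs (wf r1) \<sigma>1) (unf_rule xs (wf r1) \<sigma>2)"
      by (rule mgu_variant[OF s1(1) s2(1)])
    then have "variant r1 r2" by (rule variant_trans[OF variant_sym[OF s1(2)] variant_trans[OF _ s2(2)]])
    then show "r1 = r2" using UW r(1,2) unfolding is_unfolding_def by blast
  qed
  have fWM: "finite (wrap ar M)" unfolding wrap_def using fM by simp
  have "wf ` \<Pi>w \<subseteq> {w. set w \<subseteq> wrap ar M \<and> length w = length atoms}"
  proof
    fix w assume "w \<in> wf ` \<Pi>w"
    then obtain r where r: "r \<in> \<Pi>w" "w = wf r" by blast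
    then show "w \<in> {w. set w \<subseteq> wrap ar M \<and> length w = length atoms}"
      using wfP[OF r(1)] unfolding P_def mgu_def unifier_def by auto
  qed
  then have fPw: "finite \<Pi>w"
    by (rule inj_on_finite[OF inj _ finite_lists_length_eq[OF fWM]])
  have fin: "\<forall>r\<in>\<Pi>w. finite (rule_ans W r)"
  proof
    fix r assume r: "r \<in> \<Pi>w"
    have ok: "\<forall>m\<in>set (wf r). heads_ok m" using wfP[OF r] okW unfolding P_def by blast
    show "finite (rule_ans W r)" using ansG[OF r] G_finite[OF fW ok xs'] by simp
  qed
  have disj: "\<forall>r1\<in>\<Pi>w. \<forall>r2\<in>\<Pi>w. r1 \<noteq> r2 \<longrightarrow> rule_ans W r1 \<inter> rule_ans W r2 = {}"
  proof (intro ballI impI)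
    fix r1 r2 assume r: "r1 \<in> \<Pi>w" "r2 \<in> \<Pi>w" "r1 \<noteq> r2"
    then have "wf r1 \<noteq> wf r2" using inj r(1,2) unfolding inj_on_def by blast
    moreover have "set (wf r1) \<subseteq> wrap ar M" "set (wf r2) \<subseteq> wrap ar M"
      using wfP[OF r(1)] wfP[OF r(2)] unfolding P_def by auto
    ultimately show "rule_ans W r1 \<inter> rule_ans W r2 = {}"
      using ansG[OF r(1)] ansG[OF r(2)] G_disj[OF _ _ _ xs] by metis
  qed
  have "card (\<Union>r\<in>\<Pi>w. rule_ans W r) = (\<Sum>r\<in>\<Pi>w. card (rule_ans W r))"
    using card_UN_disjoint[OF fPw fin disj] .
  then show ?thesis using L unfolding W_def by simp
qed

end
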